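(* Let $R$ be a simple path in $T$ with consecutive vertices $r_1,\dots,r_m$, let $k$ be an integer with $2\le k\le m$, put $N=m-k+1$, and for $j=1,\dots,N$ let $P_j$ be the path $r_j,\dots,r_{j+k-1}$. Assume $|P_j|=l$ for all $j$. Then $\min_{1\le j\le N}\overline{S}(P_j)=\min\{\overline{S}(P_1),\overline{S}(P_N)\}$, i.e. the minimum of the mean service time over these shifted paths is attained at one of the two extreme positions.
   Context: Let $T=(V,E)$ be a finite tree with vertex set $V=\{v_1,\dots,v_n\}$ and positive edge lengths; $d(x,y)$ denotes the length of the unique path in $T$ between vertices $x,y$. Each vertex $v_i$ has a weight $w_i\ge 0$ with $w(T)=\sum_i w_i=1$. A path $P$ is the vertex sequence $p(1),\dots,p(k)$ of a simple path in $T$; $|P|=d(p(1),p(k))$. For $v\in V$, $p_P(v)$ denotes the unique vertex of $P$ closest to $v$. For a vertex $p$ of $P$, the branch $T_p$ (with respect to $P$) is the set of vertices $v$ with $p_P(v)=p$, and $w_{T_p}=\sum_{v_i\in T_p}w_i$. For a vertex $p$ of $P$ put $\overline{d}_P(p)=\sum_{j=1}^k w_{T_{p(j)}}\,d(p(j),p)$. Fix a speed $v_t>0$ and a constant $\overline{G}\ge0$. Define $\overline{T}_2(P)=\frac{1}{v_t}\sum_i w_i\,\overline{d}_P(p_P(v_i))$ and $\overline{S}(P)=\overline{T}_2(P)+\overline{G}$. *)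

theory Defs
  imports Complex_Main
begin

definition is_walk :: "'a set set \<Rightarrow> 'a list \<Rightarrow> bool" where
  "is_walk E xs \<longleftrightarrow> xs \<noteq> [] \<and> (\<forall>i < length xs - 1. {xs ! i, xs ! Suc i} \<in> E)"

definition is_path :: "'a set set \<Rightarrow> 'a list \<Rightarrow> bool" where
  "is_path E xs \<longleftrightarrow> is_walk E xs \<and> distinct xs"

definition is_tree :: "'a set \<Rightarrow> 'a set set \<Rightarrow> bool" where
  "is_tree V E \<longleftrightarrow> finite V \<and> V \<noteq> {} \<and>
     (\<forall>e\<in>E. \<exists>x y. e = {x, y} \<and> x \<noteq> y \<and> x \<in> V \<and> y \<in> V) \<and>
     (\<forall>x\<in>V. \<forall>y\<in>V. \<exists>!xs. is_path E xs \<and> hd xs = x \<and> last xs = y)"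

definition path_len :: "('a set \<Rightarrow> real) \<Rightarrow> 'a list \<Rightarrow> real" where
  "path_len len xs = (\<Sum>i < length xs - 1. len {xs ! i, xs ! Suc i})"

definition tdist :: "'a set set \<Rightarrow> ('a set \<Rightarrow> real) \<Rightarrow> 'a \<Rightarrow> 'a \<Rightarrow> real" where
  "tdist E len x y = path_len len (THE xs. is_path E xs \<and> hd xs = x \<and> last xs = y)"

definition plen :: "'a set set \<Rightarrow> ('a set \<Rightarrow> real) \<Rightarrow> 'a list \<Rightarrow> real" where
  "plen E len P = tdist E len (hd P) (last P)"

definition proj :: "'a set set \<Rightarrow> ('a set \<Rightarrow> real) \<Rightarrow> 'a list \<Rightarrow> 'a \<Rightarrow> 'a" where
  "proj E len P v = (THE p. p \<in> set P \<and> (\<forall>q \<in> set P. q \<noteq> p \<longrightarrow> tdist E len v p < tdist E len v q))"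

definition branch_weight :: "'a set \<Rightarrow> 'a set set \<Rightarrow> ('a set \<Rightarrow> real) \<Rightarrow> ('a \<Rightarrow> real) \<Rightarrow> 'a list \<Rightarrow> 'a \<Rightarrow> real" where
  "branch_weight V E len w P p = (\<Sum>v \<in> {v \<in> V. proj E len P v = p}. w v)"

definition dbar :: "'a set \<Rightarrow> 'a set set \<Rightarrow> ('a set \<Rightarrow> real) \<Rightarrow> ('a \<Rightarrow> real) \<Rightarrow> 'a list \<Rightarrow> 'a \<Rightarrow> real" where
  "dbar V E len w P p = (\<Sum>j < length P. branch_weight V E len w P (P ! j) * tdist E len (P ! j) p)"

definition T2bar :: "'a set \<Rightarrow> 'a set set \<Rightarrow> ('a set \<Rightarrow> real) \<Rightarrow> ('a \<Rightarrow> real) \<Rightarrow> real \<Rightarrow> 'a list \<Rightarrow> real" where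
  "T2bar V E len w vt P = (1 / vt) * (\<Sum>v \<in> V. w v * dbar V E len w P (proj E len P v))"

definition Sbar :: "'a set \<Rightarrow> 'a set set \<Rightarrow> ('a set \<Rightarrow> real) \<Rightarrow> ('a \<Rightarrow> real) \<Rightarrow> real \<Rightarrow> real \<Rightarrow> 'a list \<Rightarrow> real" where
  "Sbar V E len w vt G P = T2bar V E len w vt P + G"

end

theory Submission
  imports Defs
begin


lemma path_len_Nil[simp]: "path_len len [] = 0" by (simp add: path_len_def)
lemma path_len_single[simp]: "path_len len [a] = 0" by (simp add: path_len_def)
lemma path_len_Cons2: "path_len len (a # b # xs) = len {a,b} + path_len len (b # xs)"
  unfolding path_len_def by (simp only: length_Cons diff_Suc_1 sum.lessThan_Suc_shift) simp

lemma path_len_append: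
  "xs \<noteq> [] \<Longrightarrow> ys \<noteq> [] \<Longrightarrow>
   path_len len (xs @ ys) = path_len len xs + len {last xs, hd ys} + path_len len ys"
proof (induction xs rule: induct_list012)
  case 1 then show ?case by simp
next
  case (2 x) then show ?case by (cases ys) (auto simp: path_len_Cons2)
next
  case (3 x y zs) then show ?case by (simp add: path_len_Cons2)
qed

lemma path_len_rev: "path_len len (rev xs) = path_len len xs"
proof (induction xs rule: induct_list012)
  case (3 x y zs)
  have "path_len len (rev (x # y # zs)) = path_len len (rev (y # zs) @ [x])" by simp
  also have "\<dots> = path_len len (rev (y # zs)) + len {y, x}"
    by (subst path_len_append) auto
  also have "\<dots> = path_len len (x # y # zs)" using 3 by (simp add: path_len_Cons2 insert_commute)
  finally show ?case .
qed auto

lemma is_walk_single[simp]: "is_walk E [a]" by (simp add: is_walk_def)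
lemma is_walk_Nil[simp]: "\<not> is_walk E []" by (simp add: is_walk_def)
lemma is_walk_Cons2: "is_walk E (a # b # xs) \<longleftrightarrow> {a,b} \<in> E \<and> is_walk E (b # xs)"
  unfolding is_walk_def by (auto simp: less_Suc_eq_0_disj)

lemma is_walk_append: "is_walk E (xs @ [a]) \<Longrightarrow> is_walk E (a # ys) \<Longrightarrow> is_walk E (xs @ a # ys)"
proof (induction xs rule: induct_list012)
  case (2 x) then show ?case by (simp add: is_walk_Cons2)
next
  case (3 x y zs) then show ?case by (simp add: is_walk_Cons2)
qed auto

lemma is_walk_rev: "is_walk E xs \<Longrightarrow> is_walk E (rev xs)"
proof (induction xs rule: induct_list012)
  case (3 x y zs)
  have "is_walk E (rev zs @ y # [x])"
    by (rule is_walk_append) (use 3 in \<open>auto simp: is_walk_Cons2 insert_commute\<close>)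
  then show ?case by simp
qed auto

lemma is_walk_drop: "is_walk E xs \<Longrightarrow> n < length xs \<Longrightarrow> is_walk E (drop n xs)"
  unfolding is_walk_def by auto

lemma is_walk_take: "is_walk E xs \<Longrightarrow> 0 < n \<Longrightarrow> is_walk E (take n xs)"
  unfolding is_walk_def by auto

lemma path_len_nonneg: "is_walk E xs \<Longrightarrow> \<forall>e\<in>E. len e > 0 \<Longrightarrow> path_len len xs \<ge> 0"
  unfolding path_len_def is_walk_def
  by (intro sum_nonneg) (auto intro: less_imp_le)

lemma tdist_eq:
  assumes "is_tree V E" "x \<in> V" "y \<in> V" "is_path E xs" "hd xs = x" "last xs = y"
  shows "tdist E len x y = path_len len xs"
proof -
  have "\<exists>!xs. is_path E xs \<and> hd xs = x \<and> last xs = y" using assms(1-3) unfolding is_tree_def by blast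
  then have "(THE xs. is_path E xs \<and> hd xs = x \<and> last xs = y) = xs"
    using assms(4-6) by (intro the1_equality) auto
  then show ?thesis unfolding tdist_def by simp
qed



locale setting =
  fixes V :: "'a set" and E :: "'a set set" and len :: "'a set \<Rightarrow> real" and R :: "'a list"
  assumes tree: "is_tree V E" and len_pos: "\<forall>e\<in>E. len e > 0"
    and R_path: "is_path E R" and R_in: "set R \<subseteq> V"
begin

definition d :: "nat \<Rightarrow> real" where "d e = len {R!e, R!Suc e}"
definition X :: "nat \<Rightarrow> real" where "X i = (\<Sum>e<i. d e)"
definition seg :: "nat \<Rightarrow> nat \<Rightarrow> 'a list" where "seg a b = take (Suc b - a) (drop a R)"

lemma X_Suc: "X (Suc i) = X i + d i" by (simp add: X_def)

lemma d_pos: "Suc e < length R \<Longrightarrow> d e > 0"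
  using R_path len_pos unfolding is_path_def is_walk_def d_def by auto

lemma X_less: "i < j \<Longrightarrow> j < length R \<Longrightarrow> X i < X j"
proof (induction j)
  case (Suc j)
  have "d j > 0" using d_pos Suc by simp
  then show ?case using Suc by (cases "i = j") (auto simp: X_Suc)
qed simp

lemma X_le: "i \<le> j \<Longrightarrow> j < length R \<Longrightarrow> X i \<le> X j"
  using X_less by (cases "i = j") (auto intro: less_imp_le)

lemma seg_basic:
  assumes "a \<le> b" "b < length R"
  shows "seg a b \<noteq> [] \<and> hd (seg a b) = R!a \<and> last (seg a b) = R!b \<and> path_len len (seg a b) = X b - X a"
  using assms
proof (induction b rule: dec_induct)
  case base
  have "seg a a = [R!a]" unfolding seg_def using base
    by (simp add: take_Suc_conv_app_nth)
  then show ?case by simp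
next
  case (step b)
  have eq: "seg a (Suc b) = seg a b @ [R ! Suc b]"
    unfolding seg_def using step
    by (simp add: Suc_diff_le take_Suc_conv_app_nth)
  have IH: "seg a b \<noteq> [] \<and> hd (seg a b) = R!a \<and> last (seg a b) = R!b \<and> path_len len (seg a b) = X b - X a"
    using step by simp
  show ?case using IH unfolding eq
    by (simp add: path_len_append X_Suc d_def)
qed

lemma seg_path: "a \<le> b \<Longrightarrow> b < length R \<Longrightarrow> is_path E (seg a b)"
  unfolding seg_def is_path_def using R_path unfolding is_path_def
  by (auto intro!: is_walk_take is_walk_drop)

lemma seg_set: "set (seg a b) \<subseteq> set R"
  unfolding seg_def by (meson set_drop_subset set_take_subset subset_trans)

lemma tdist_self: "x \<in> V \<Longrightarrow> tdist E len x x = 0"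
  using tdist_eq[OF tree, of x x "[x]" len] by (simp add: is_path_def)

lemma tdist_R: assumes "q < length R" "i < length R"
  shows "tdist E len (R!q) (R!i) = \<bar>X i - X q\<bar>"
proof (cases "q \<le> i")
  case True
  have "R!q \<in> V" "R!i \<in> V" using assms R_in by auto
  then show ?thesis using seg_basic[of q i] seg_path[of q i] assms True X_le[of q i]
    tdist_eq[OF tree, of "R!q" "R!i" "seg q i" len] by auto
next
  case False
  have p: "is_path E (rev (seg i q))" using seg_path[of i q] False assms
    unfolding is_path_def by (auto intro: is_walk_rev)
  have "R!q \<in> V" "R!i \<in> V" using assms R_in by auto
  then show ?thesis using seg_basic[of i q] p False assms X_le[of i q]
    tdist_eq[OF tree, of "R!q" "R!i" "rev (seg i q)" len]
    by (auto simp: path_len_rev hd_rev last_rev)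
qed

end

context setting begin

lemma seg_distinct: "distinct (seg a b)"
  using R_path unfolding seg_def is_path_def by auto

lemma tdist_general:
  assumes v: "v \<in> V"
  shows "\<exists>p c. p < length R \<and> c \<ge> 0 \<and> (\<forall>i<length R. tdist E len v (R!i) = c + \<bar>X i - X p\<bar>)"
proof -
  have Rne: "R \<noteq> []" using R_path unfolding is_path_def by auto
  then have R0: "R!0 \<in> V" using R_in by auto
  obtain Q where Q: "is_path E Q" "hd Q = v" "last Q = R!0"
    using tree v R0 unfolding is_tree_def by blast
  define Q1 where "Q1 = takeWhile (\<lambda>x. x \<notin> set R) Q"
  define Q2 where "Q2 = dropWhile (\<lambda>x. x \<notin> set R) Q"
  have QQ: "Q = Q1 @ Q2" unfolding Q1_def Q2_def by simp
  have Qne: "Q \<noteq> []" using Q unfolding is_path_def by auto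
  have Q2ne: "Q2 \<noteq> []"
  proof
    assume "Q2 = []"
    then have "last Q \<in> set Q1" using QQ Qne by auto
    then have "last Q \<notin> set R" unfolding Q1_def by (auto dest: set_takeWhileD)
    then show False using Q Rne by auto
  qed
  define \<pi> where "\<pi> = hd Q2"
  have piR: "\<pi> \<in> set R" using hd_dropWhile[of "\<lambda>x. x \<notin> set R" Q] Q2ne
    unfolding \<pi>_def Q2_def by auto
  obtain p where p: "p < length R" "R!p = \<pi>" using piR by (auto simp: in_set_conv_nth)
  have Q2eq: "Q2 = \<pi> # tl Q2" using Q2ne unfolding \<pi>_def by simp
  have Q1disj: "set Q1 \<inter> set R = {}" unfolding Q1_def by (auto dest: set_takeWhileD)
  have Q1dist: "distinct Q1" using Q QQ unfolding is_path_def by (metis distinct_append)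
  have Q1w: "is_walk E (Q1 @ [\<pi>])"
  proof -
    have "take (Suc (length Q1)) Q = Q1 @ take 1 Q2" using QQ by simp
    moreover have "take 1 Q2 = [\<pi>]" by (subst Q2eq) simp
    ultimately have "Q1 @ [\<pi>] = take (Suc (length Q1)) Q" by simp
    then show ?thesis using Q unfolding is_path_def by (auto intro: is_walk_take)
  qed
  define c where "c = path_len len (Q1 @ [\<pi>])"
  have c0: "c \<ge> 0" unfolding c_def using Q1w len_pos by (rule path_len_nonneg)
  have "tdist E len v (R!i) = c + \<bar>X i - X p\<bar>" if i: "i < length R" for i
  proof -
    define S where "S = (if p \<le> i then seg p i else rev (seg i p))"
    have S: "S \<noteq> [] \<and> hd S = \<pi> \<and> last S = R!i \<and> path_len len S = \<bar>X i - X p\<bar>"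
    proof (cases "p \<le> i")
      case True then show ?thesis using seg_basic[of p i] X_le[of p i] i p unfolding S_def by auto
    next
      case False then show ?thesis using seg_basic[of i p] X_le[of i p] i p unfolding S_def
        by (auto simp: path_len_rev hd_rev last_rev)
    qed
    have Sp: "is_path E S"
      using seg_path[of p i] seg_path[of i p] i p unfolding S_def is_path_def
      by (auto intro: is_walk_rev)
    have Sset: "set S \<subseteq> set R" unfolding S_def using seg_set by auto
    have Seq: "S = \<pi> # tl S" using S by (metis list.collapse)
    define W where "W = Q1 @ S"
    have Ww: "is_walk E W"
    proof (cases "Q1 = []")
      case True then show ?thesis using Sp unfolding W_def is_path_def by simp
    next
      case False
      have "is_walk E (Q1 @ \<pi> # tl S)"
        by (rule is_walk_append[OF Q1w]) (metis Seq Sp is_path_def)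
      then show ?thesis unfolding W_def using Seq by metis
    qed
    have Wd: "distinct W" using Q1dist Sp Sset Q1disj unfolding W_def is_path_def by auto
    have Whd: "hd W = v"
    proof (cases "Q1 = []")
      case True then show ?thesis using Q QQ S unfolding W_def \<pi>_def by simp
    next
      case False then show ?thesis using Q QQ unfolding W_def by simp
    qed
    have Wlast: "last W = R!i" using S unfolding W_def by simp
    have "tdist E len v (R!i) = path_len len W"
      using tdist_eq[OF tree v _ _ Whd Wlast] Ww Wd i R_in nth_mem unfolding is_path_def by blast
    also have "\<dots> = c + \<bar>X i - X p\<bar>"
    proof (cases "Q1 = []")
      case True then show ?thesis unfolding W_def c_def using S by simp
    next
      case False then show ?thesis unfolding W_def c_def using S
        by (simp add: path_len_append)
    qed
    finally show ?thesis .
  qed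
  then show ?thesis using p c0 by blast
qed

end


definition cl :: "nat \<Rightarrow> nat \<Rightarrow> nat \<Rightarrow> nat" where "cl j k p = max j (min (j+k-1) p)"

context setting begin

lemma seg_length: "b < length R \<Longrightarrow> length (seg a b) = Suc b - a"
  unfolding seg_def by simp

lemma seg_nth: "b < length R \<Longrightarrow> t < Suc b - a \<Longrightarrow> seg a b ! t = R!(a+t)"
  unfolding seg_def by simp

lemma seg_mem: "b < length R \<Longrightarrow> x \<in> set (seg a b) \<longleftrightarrow> (\<exists>i. a \<le> i \<and> i \<le> b \<and> x = R!i)"
proof -
  assume b: "b < length R"
  show ?thesis
  proof
    assume "x \<in> set (seg a b)"
    then obtain t where "t < Suc b - a" "x = seg a b ! t" by (auto simp: in_set_conv_nth seg_length[OF b])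
    then show "\<exists>i. a \<le> i \<and> i \<le> b \<and> x = R!i" using seg_nth[OF b] by (intro exI[of _ "a+t"]) auto
  next
    assume "\<exists>i. a \<le> i \<and> i \<le> b \<and> x = R!i"
    then obtain i where i: "a \<le> i" "i \<le> b" "x = R!i" by blast
    then have "seg a b ! (i - a) = x" using seg_nth[OF b, of "i-a"] by simp
    moreover have "i - a < length (seg a b)" using i seg_length[OF b] by simp
    ultimately show "x \<in> set (seg a b)" by (metis nth_mem)
  qed
qed

lemma R_nth_eq: "i < length R \<Longrightarrow> i' < length R \<Longrightarrow> R!i = R!i' \<longleftrightarrow> i = i'"
  using R_path unfolding is_path_def by (simp add: nth_eq_iff_index_eq)

lemma proj_eq:
  assumes v: "v \<in> V" and k: "1 \<le> k" and jk: "j + k \<le> length R"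
    and p: "p < length R" and dv: "\<forall>i<length R. tdist E len v (R!i) = c + \<bar>X i - X p\<bar>"
  shows "proj E len (seg j (j+k-1)) v = R!(cl j k p)"
proof -
  have b: "j + k - 1 < length R" using k jk by simp
  have clr: "j \<le> cl j k p" "cl j k p \<le> j+k-1" using k unfolding cl_def by auto
  have strict: "\<bar>X (cl j k p) - X p\<bar> < \<bar>X i - X p\<bar>" if "j \<le> i" "i \<le> j+k-1" "i \<noteq> cl j k p" for i
  proof (cases "p < j")
    case True
    then have "cl j k p = j" using k unfolding cl_def by auto
    then show ?thesis using that True X_less[of p j] X_less[of j i] b by auto
  next
    case False
    show ?thesis
    proof (cases "p \<le> j+k-1")
      case True
      then have "cl j k p = p" using False unfolding cl_def by auto
      then show ?thesis using that X_less[of p i] X_less[of i p] b p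
        by (cases "p < i") auto
    next
      case F2: False
      then have "cl j k p = j+k-1" using False k unfolding cl_def by auto
      then show ?thesis using that F2 X_less[of i "j+k-1"] X_less[of "j+k-1" p] b p by auto
    qed
  qed
  let ?P = "\<lambda>q. q \<in> set (seg j (j+k-1)) \<and> (\<forall>q' \<in> set (seg j (j+k-1)). q' \<noteq> q \<longrightarrow> tdist E len v q < tdist E len v q')"
  have Pc: "?P (R!(cl j k p))"
  proof
    show "R!(cl j k p) \<in> set (seg j (j+k-1))" using seg_mem[OF b] clr by blast
    show "\<forall>q' \<in> set (seg j (j+k-1)). q' \<noteq> R!(cl j k p) \<longrightarrow> tdist E len v (R!(cl j k p)) < tdist E len v q'"
    proof (intro ballI impI)
      fix q' assume "q' \<in> set (seg j (j+k-1))" "q' \<noteq> R!(cl j k p)"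
      then obtain i where i: "j \<le> i" "i \<le> j+k-1" "q' = R!i" "i \<noteq> cl j k p" using seg_mem[OF b] by blast
      have "i < length R" "cl j k p < length R" using i clr b by auto
      then show "tdist E len v (R!(cl j k p)) < tdist E len v q'"
        using dv strict[OF i(1,2,4)] i(3) by simp
    qed
  qed
  have "(THE q. ?P q) = R!(cl j k p)"
  proof (rule the_equality)
    show "?P (R!(cl j k p))" by (rule Pc)
    fix q assume "?P q"
    then show "q = R!(cl j k p)" using Pc
    proof -
      assume a: "?P q"
      show ?thesis
      proof (rule ccontr)
        assume ne: "q \<noteq> R!(cl j k p)"
        have "tdist E len v q < tdist E len v (R!(cl j k p))" using a Pc ne by auto
        moreover have "tdist E len v (R!(cl j k p)) < tdist E len v q" using a Pc ne by auto
        ultimately show False by simp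
      qed
    qed
  qed
  then show ?thesis unfolding proj_def .
qed

end


locale setting2 = setting +
  fixes w :: "'a \<Rightarrow> real" and pp :: "'a \<Rightarrow> nat" and cc :: "'a \<Rightarrow> real"
  assumes w_nonneg: "\<forall>v\<in>V. w v \<ge> 0" and w_sum: "(\<Sum>v\<in>V. w v) = 1"
    and pc: "\<forall>v\<in>V. pp v < length R \<and> cc v \<ge> 0 \<and> (\<forall>i<length R. tdist E len v (R!i) = cc v + \<bar>X i - X (pp v)\<bar>)"
begin

lemma finV: "finite V" using tree unfolding is_tree_def by auto

lemma T2sum:
  assumes k: "1 \<le> k" and jk: "j + k \<le> length R"
  shows "(\<Sum>v\<in>V. w v * dbar V E len w (seg j (j+k-1)) (proj E len (seg j (j+k-1)) v))
       = (\<Sum>v\<in>V. \<Sum>u\<in>V. w v * w u * \<bar>X (cl j k (pp v)) - X (cl j k (pp u))\<bar>)"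
proof -
  define P where "P = seg j (j+k-1)"
  define C where "C u = cl j k (pp u)" for u
  have b: "j + k - 1 < length R" using k jk by simp
  have Cr: "j \<le> C u" "C u \<le> j+k-1" for u using k unfolding C_def cl_def by auto
  have projC: "proj E len P u = R!(C u)" if "u \<in> V" for u
    unfolding P_def C_def using proj_eq[OF that k jk, of "pp u" "cc u"] pc that by auto
  have lenP: "length P = k" unfolding P_def using seg_length[OF b] k by simp
  have Pnth: "P!t = R!(j+t)" if "t < k" for t unfolding P_def using seg_nth[OF b, of t j] that k by simp
  have bw: "branch_weight V E len w P (R!(j+t)) = (\<Sum>u\<in>{u\<in>V. C u - j = t}. w u)" if t: "t < k" for t
  proof -
    have "{u\<in>V. proj E len P u = R!(j+t)} = {u\<in>V. C u - j = t}"
    proof (intro Collect_cong conj_cong refl)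
      fix u assume u: "u \<in> V"
      have "C u < length R" "j + t < length R" using Cr[of u] b t by auto
      then show "(proj E len P u = R!(j+t)) = (C u - j = t)"
        using projC[OF u] R_nth_eq Cr[of u] by auto
    qed
    then show ?thesis unfolding branch_weight_def by simp
  qed
  have dbarC: "dbar V E len w P (R!(C v)) = (\<Sum>u\<in>V. w u * \<bar>X (C v) - X (C u)\<bar>)" if v: "v \<in> V" for v
  proof -
    have "dbar V E len w P (R!(C v)) = (\<Sum>t<k. (\<Sum>u\<in>{u\<in>V. C u - j = t}. w u) * \<bar>X (C v) - X (j+t)\<bar>)"
      unfolding dbar_def lenP
    proof (rule sum.cong[OF refl])
      fix t assume t: "t \<in> {..<k}"
      have "j + t < length R" "C v < length R" using t b Cr[of v] by auto
      then show "branch_weight V E len w P (P ! t) * tdist E len (P ! t) (R ! C v) =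
          (\<Sum>u\<in>{u\<in>V. C u - j = t}. w u) * \<bar>X (C v) - X (j+t)\<bar>"
        using Pnth bw t tdist_R by auto
    qed
    also have "\<dots> = (\<Sum>t<k. \<Sum>u\<in>{u\<in>V. C u - j = t}. w u * \<bar>X (C v) - X (C u)\<bar>)"
      unfolding sum_distrib_right
    proof (intro sum.cong refl)
      fix t u assume "u \<in> {u\<in>V. C u - j = t}"
      then have "C u = j + t" using Cr[of u] by auto
      then show "w u * \<bar>X (C v) - X (j+t)\<bar> = w u * \<bar>X (C v) - X (C u)\<bar>" by simp
    qed
    also have "\<dots> = (\<Sum>u\<in>V. w u * \<bar>X (C v) - X (C u)\<bar>)"
    proof (rule sum.group[OF finV])
      show "finite {..<k}" by simp
      show "(\<lambda>x. C x - j) ` V \<subseteq> {..<k}"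
      proof
        fix y assume "y \<in> (\<lambda>x. C x - j) ` V"
        then obtain x where "y = C x - j" by auto
        then show "y \<in> {..<k}" using Cr[of x] k by auto
      qed
    qed
    finally show ?thesis .
  qed
  have "(\<Sum>v\<in>V. w v * dbar V E len w P (proj E len P v)) = (\<Sum>v\<in>V. w v * (\<Sum>u\<in>V. w u * \<bar>X (C v) - X (C u)\<bar>))"
    by (rule sum.cong) (auto simp: projC dbarC)
  also have "\<dots> = (\<Sum>v\<in>V. \<Sum>u\<in>V. w v * w u * \<bar>X (C v) - X (C u)\<bar>)"
    by (simp add: sum_distrib_left mult.assoc)
  finally show ?thesis unfolding P_def C_def .
qed

end


lemma split_pred_sum:
  fixes w :: "'a \<Rightarrow> real"
  assumes "finite V" "(\<Sum>v\<in>V. w v) = 1"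
  shows "(\<Sum>u\<in>{u\<in>V. \<not> Q u}. w u) = 1 - (\<Sum>u\<in>{u\<in>V. Q u}. w u)"
proof -
  have "(\<Sum>u\<in>V. w u) = (\<Sum>u\<in>V. (if Q u then w u else 0) + (if \<not> Q u then w u else 0))"
    by (rule sum.cong) auto
  also have "\<dots> = (\<Sum>u\<in>{u\<in>V. Q u}. w u) + (\<Sum>u\<in>{u\<in>V. \<not> Q u}. w u)"
    by (simp add: sum.distrib sum.inter_filter[OF assms(1)])
  finally show ?thesis using assms(2) by simp
qed

lemma cross_sum:
  fixes w :: "'a \<Rightarrow> real"
  assumes fin: "finite V" and ws: "(\<Sum>v\<in>V. w v) = 1"
  shows "(\<Sum>v\<in>V. \<Sum>u\<in>V. w v * w u * (if Q v \<noteq> Q u then 1 else 0))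
        = 2 * (\<Sum>u\<in>{u\<in>V. Q u}. w u) * (1 - (\<Sum>u\<in>{u\<in>V. Q u}. w u))"
proof -
  define A where "A = (\<Sum>u\<in>{u\<in>V. Q u}. w u)"
  have Ac: "(\<Sum>u\<in>{u\<in>V. \<not> Q u}. w u) = 1 - A" unfolding A_def by (rule split_pred_sum[OF fin ws])
  have inner: "(\<Sum>u\<in>V. w v * w u * (if Q v \<noteq> Q u then 1 else 0)) = w v * (if Q v then 1 - A else A)" for v
  proof (cases "Q v")
    case True
    have "(\<Sum>u\<in>V. w v * w u * (if Q v \<noteq> Q u then 1 else 0)) = w v * (\<Sum>u\<in>V. if \<not> Q u then w u else 0)"
      using True by (simp add: sum_distrib_left if_distrib cong: if_cong)
    also have "\<dots> = w v * (1 - A)" using Ac sum.inter_filter[OF fin, of w "\<lambda>u. \<not> Q u"] by simp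
    finally show ?thesis using True by simp
  next
    case False
    have "(\<Sum>u\<in>V. w v * w u * (if Q v \<noteq> Q u then 1 else 0)) = w v * (\<Sum>u\<in>V. if Q u then w u else 0)"
      using False by (simp add: sum_distrib_left if_distrib cong: if_cong)
    also have "\<dots> = w v * A" unfolding A_def using sum.inter_filter[OF fin, of w Q] by simp
    finally show ?thesis using False by simp
  qed
  have "(\<Sum>v\<in>V. w v * (if Q v then 1 - A else A)) = (\<Sum>v\<in>V. (if Q v then w v else 0) * (1 - A) + (if \<not> Q v then w v else 0) * A)"
    by (rule sum.cong) auto
  also have "\<dots> = A * (1 - A) + (1 - A) * A"
    by (simp add: sum.distrib sum_distrib_right[symmetric] sum.inter_filter[OF fin, symmetric] Ac A_def[symmetric])
  finally show ?thesis using inner unfolding A_def[symmetric] by simp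
qed

context setting2 begin

definition A :: "nat \<Rightarrow> real" where "A e = (\<Sum>u\<in>{u\<in>V. pp u \<le> e}. w u)"

lemma X_diff: "m \<le> n \<Longrightarrow> X n - X m = (\<Sum>e\<in>{m..<n}. d e)"
  unfolding X_def lessThan_atLeast0 by (simp add: sum_diff_nat_ivl)

lemma absX:
  assumes k: "1 \<le> k" and jk: "j + k \<le> length R"
  shows "\<bar>X (cl j k a) - X (cl j k b)\<bar> = (\<Sum>e\<in>{j..<j+k-1}. d e * (if (a \<le> e) \<noteq> (b \<le> e) then 1 else 0))"
proof -
  have main: "\<bar>X (cl j k a) - X (cl j k b)\<bar> = (\<Sum>e\<in>{j..<j+k-1}. d e * (if (a \<le> e) \<noteq> (b \<le> e) then 1 else 0))"
    if ab: "a \<le> b" for a b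
  proof -
    have le: "cl j k a \<le> cl j k b" using ab unfolding cl_def by auto
    have lt: "cl j k b < length R" using k jk unfolding cl_def by auto
    have "\<bar>X (cl j k a) - X (cl j k b)\<bar> = X (cl j k b) - X (cl j k a)"
      using X_le[OF le lt] by simp
    also have "\<dots> = (\<Sum>e\<in>{cl j k a..<cl j k b}. d e)" by (rule X_diff[OF le])
    also have "{cl j k a..<cl j k b} = {e\<in>{j..<j+k-1}. (a \<le> e) \<noteq> (b \<le> e)}"
      using ab k unfolding cl_def by auto
    also have "(\<Sum>e\<in>\<dots>. d e) = (\<Sum>e\<in>{j..<j+k-1}. if (a \<le> e) \<noteq> (b \<le> e) then d e else 0)"
      by (rule sum.inter_filter) simp
    also have "\<dots> = (\<Sum>e\<in>{j..<j+k-1}. d e * (if (a \<le> e) \<noteq> (b \<le> e) then 1 else 0))"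
      by (rule sum.cong) auto
    finally show ?thesis .
  qed
  show ?thesis
  proof (cases "a \<le> b")
    case True then show ?thesis by (rule main)
  next
    case False
    then have "\<bar>X (cl j k b) - X (cl j k a)\<bar> = (\<Sum>e\<in>{j..<j+k-1}. d e * (if (b \<le> e) \<noteq> (a \<le> e) then 1 else 0))"
      by (intro main) simp
    then show ?thesis by (simp add: abs_minus_commute eq_commute)
  qed
qed

lemma Fformula:
  assumes k: "1 \<le> k" and jk: "j + k \<le> length R"
  shows "(\<Sum>v\<in>V. \<Sum>u\<in>V. w v * w u * \<bar>X (cl j k (pp v)) - X (cl j k (pp u))\<bar>)
       = (\<Sum>e\<in>{j..<j+k-1}. d e * (2 * A e * (1 - A e)))"
proof -
  have "(\<Sum>v\<in>V. \<Sum>u\<in>V. w v * w u * \<bar>X (cl j k (pp v)) - X (cl j k (pp u))\<bar>)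
      = (\<Sum>v\<in>V. \<Sum>u\<in>V. \<Sum>e\<in>{j..<j+k-1}. d e * (w v * w u * (if (pp v \<le> e) \<noteq> (pp u \<le> e) then 1 else 0)))"
    unfolding absX[OF k jk] by (simp add: sum_distrib_left mult_ac)
  also have "\<dots> = (\<Sum>e\<in>{j..<j+k-1}. \<Sum>v\<in>V. \<Sum>u\<in>V. d e * (w v * w u * (if (pp v \<le> e) \<noteq> (pp u \<le> e) then 1 else 0)))"
  proof -
    let ?f = "\<lambda>v u e. d e * (w v * w u * (if (pp v \<le> e) \<noteq> (pp u \<le> e) then 1 else 0))"
    have "(\<Sum>v\<in>V. \<Sum>u\<in>V. \<Sum>e\<in>{j..<j+k-1}. ?f v u e) = (\<Sum>v\<in>V. \<Sum>e\<in>{j..<j+k-1}. \<Sum>u\<in>V. ?f v u e)"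
      by (rule sum.cong[OF refl], rule sum.swap)
    also have "\<dots> = (\<Sum>e\<in>{j..<j+k-1}. \<Sum>v\<in>V. \<Sum>u\<in>V. ?f v u e)"
      by (rule sum.swap)
    finally show ?thesis .
  qed
  also have "\<dots> = (\<Sum>e\<in>{j..<j+k-1}. d e * (\<Sum>v\<in>V. \<Sum>u\<in>V. w v * w u * (if (pp v \<le> e) \<noteq> (pp u \<le> e) then 1 else 0)))"
    by (simp add: sum_distrib_left)
  also have "\<dots> = (\<Sum>e\<in>{j..<j+k-1}. d e * (2 * A e * (1 - A e)))"
    unfolding A_def using cross_sum[OF finV w_sum] by simp
  finally show ?thesis .
qed

end


lemma endpoint_min:
  fixes F s \<alpha> :: "nat \<Rightarrow> real"
  assumes step: "\<And>j. Suc j < N \<Longrightarrow> F (Suc j) - F j = \<alpha> j * s j"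
    and apos: "\<And>j. Suc j < N \<Longrightarrow> \<alpha> j \<ge> 0"
    and smono: "\<And>i j. i \<le> j \<Longrightarrow> s j \<le> s i"
    and j: "j < N"
  shows "min (F 0) (F (N-1)) \<le> F j"
proof (cases "s j > 0")
  case True
  have "F 0 \<le> F i" if "i \<le> j" for i
    using that
  proof (induction i)
    case (Suc i)
    have "s i > 0" using smono[of i j] Suc True by simp
    then have "F (Suc i) - F i \<ge> 0" using step[of i] apos[of i] Suc j by simp
    then show ?case using Suc by simp
  qed simp
  then show ?thesis by (simp add: min_le_iff_disj)
next
  case False
  have "F (j + m) \<le> F j" if "j + m < N" for m
    using that
  proof (induction m)
    case (Suc m)
    have "s (j+m) \<le> 0" using smono[of j "j+m"] False by simp
    then have "F (Suc (j+m)) - F (j+m) \<le> 0" using step[of "j+m"] apos[of "j+m"] Suc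
      by (simp add: mult_nonneg_nonpos)
    then show ?case using Suc by simp
  qed simp
  from this[of "N - 1 - j"] j show ?thesis by (simp add: min_le_iff_disj)
qed

theorem corollary4:
  fixes V :: "'a set" and E :: "'a set set" and len :: "'a set \<Rightarrow> real"
    and w :: "'a \<Rightarrow> real" and vt G l :: real and R :: "'a list" and k :: nat
  assumes tree: "is_tree V E"
    and len_pos: "\<forall>e\<in>E. len e > 0"
    and w_nonneg: "\<forall>v\<in>V. w v \<ge> 0"
    and w_sum: "(\<Sum>v\<in>V. w v) = 1"
    and vt_pos: "vt > 0"
    and G_nonneg: "G \<ge> 0"
    and R_path: "is_path E R" and R_in: "set R \<subseteq> V"
    and k_ge: "2 \<le> k" and k_le: "k \<le> length R"
    and same_len: "\<forall>j < length R - k + 1. plen E len (take k (drop j R)) = l"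
  shows "Min ((\<lambda>j. Sbar V E len w vt G (take k (drop j R))) ` {..< length R - k + 1})
         = min (Sbar V E len w vt G (take k R))
               (Sbar V E len w vt G (take k (drop (length R - k) R)))"
proof -
  interpret S1: setting V E len R using tree len_pos R_path R_in by unfold_locales
  have "\<forall>v\<in>V. \<exists>pc. fst pc < length R \<and> snd pc \<ge> 0 \<and> (\<forall>i<length R. tdist E len v (R!i) = snd pc + \<bar>S1.X i - S1.X (fst pc)\<bar>)"
    using S1.tdist_general by fastforce
  then obtain f where f: "\<forall>v\<in>V. fst (f v) < length R \<and> snd (f v) \<ge> 0 \<and> (\<forall>i<length R. tdist E len v (R!i) = snd (f v) + \<bar>S1.X i - S1.X (fst (f v))\<bar>)"
    by (metis bchoice)
  interpret S2: setting2 V E len R w "\<lambda>v. fst (f v)" "\<lambda>v. snd (f v)"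
    using w_nonneg w_sum f by unfold_locales auto
  define N where "N = length R - k + 1"
  define F where "F j = (\<Sum>e\<in>{j..<j+k-1}. S1.d e * (2 * S2.A e * (1 - S2.A e)))" for j
  have k1: "1 \<le> k" using k_ge by simp
  have takeseg: "take k (drop j R) = S1.seg j (j+k-1)" for j
    unfolding S1.seg_def using k1 by (simp add: Suc_diff_le)
  have Sb: "Sbar V E len w vt G (take k (drop j R)) = (1/vt) * F j + G" if "j < N" for j
  proof -
    have jk: "j + k \<le> length R" using that k_le unfolding N_def by simp
    show ?thesis unfolding Sbar_def T2bar_def takeseg F_def
      using S2.T2sum[OF k1 jk] S2.Fformula[OF k1 jk] by simp
  qed
  have plenX: "S1.X (j+k-1) - S1.X j = l" if "j < N" for j
  proof -
    have jk: "j + k - 1 < length R" using that k_le k1 unfolding N_def by simp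
    have "plen E len (take k (drop j R)) = l" using same_len that unfolding N_def by simp
    moreover have "plen E len (take k (drop j R)) = tdist E len (R!j) (R!(j+k-1))"
    proof -
      have jle: "j \<le> j+k-1" using k1 by simp
      show ?thesis unfolding plen_def takeseg using S1.seg_basic[OF jle jk] by simp
    qed
    moreover have "tdist E len (R!j) (R!(j+k-1)) = S1.X (j+k-1) - S1.X j"
      using S1.tdist_R[of j "j+k-1"] jk S1.X_le[of j "j+k-1"] k1 by simp
    ultimately show ?thesis by simp
  qed
  have per: "S1.d (j+k-1) = S1.d j" if "Suc j < N" for j
  proof -
    have "S1.X (Suc j + k - 1) - S1.X (Suc j) = S1.X (j+k-1) - S1.X j"
      using plenX[of j] plenX[of "Suc j"] that by simp
    moreover have "Suc j + k - 1 = Suc (j + k - 1)" using k1 by simp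
    moreover have "S1.X (Suc (j+k-1)) = S1.X (j+k-1) + S1.d (j+k-1)" by (rule S1.X_Suc)
    moreover have "S1.X (Suc j) = S1.X j + S1.d j" by (rule S1.X_Suc)
    ultimately show ?thesis by simp
  qed
  have Amono: "S2.A e \<le> S2.A e'" if "e \<le> e'" for e e'
    unfolding S2.A_def using that w_nonneg S2.finV by (intro sum_mono2) auto
  define g where "g a = S1.d a * (2 * S2.A a * (1 - S2.A a))" for a
  have step: "F (Suc j) - F j = (2 * S1.d j * (S2.A (j+k-1) - S2.A j)) * (1 - S2.A j - S2.A (j+k-1))"
    if "Suc j < N" for j
  proof -
    have e1: "Suc j + k - 1 = j + k" using k1 by simp
    have s1: "sum g {j..<j+k} = g j + sum g {Suc j..<j+k}"
      by (rule sum.atLeast_Suc_lessThan) (use k1 in simp)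
    have s2: "sum g {j..<j+k} = sum g {j..<j+k-1} + g (j+k-1)"
    proof -
      have "j + k = Suc (j + k - 1)" using k1 by simp
      then have "sum g {j..<j+k} = sum g {j..<Suc (j+k-1)}" by simp
      also have "\<dots> = sum g {j..<j+k-1} + g (j+k-1)" by (rule sum.atLeastLessThan_Suc) (use k1 in simp)
      finally show ?thesis .
    qed
    have "F (Suc j) - F j = g (j+k-1) - g j" unfolding F_def g_def[symmetric] e1 using s1 s2 by simp
    then show ?thesis unfolding g_def using per[OF that] by (simp add: algebra_simps)
  qed
  have Fmin: "min (F 0) (F (N-1)) \<le> F j" if "j < N" for j
  proof (rule endpoint_min[where s = "\<lambda>j. 1 - S2.A j - S2.A (j+k-1)"
        and \<alpha> = "\<lambda>j. 2 * S1.d j * (S2.A (j+k-1) - S2.A j)"])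
    show "F (Suc j) - F j = 2 * S1.d j * (S2.A (j+k-1) - S2.A j) * (1 - S2.A j - S2.A (j+k-1))"
      if "Suc j < N" for j using step[OF that] .
    show "0 \<le> 2 * S1.d j * (S2.A (j+k-1) - S2.A j)" if "Suc j < N" for j
    proof -
      have "Suc j < length R" using that k1 k_le unfolding N_def by simp
      then have "S1.d j > 0" by (rule S1.d_pos)
      moreover have "S2.A j \<le> S2.A (j+k-1)" by (rule Amono) (use k1 in simp)
      ultimately show ?thesis by simp
    qed
    show "1 - S2.A j' - S2.A (j'+k-1) \<le> 1 - S2.A i - S2.A (i+k-1)" if "i \<le> j'" for i j'
    proof -
      have "i+k-1 \<le> j'+k-1" using that by simp
      then have "S2.A (i+k-1) \<le> S2.A (j'+k-1)" by (rule Amono)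
      then show ?thesis using Amono[OF that] by simp
    qed
    show "j < N" by (rule that)
  qed
  have N0: "0 < N" unfolding N_def by simp
  let ?S = "\<lambda>j. Sbar V E len w vt G (take k (drop j R))"
  have S0: "?S 0 = (1/vt) * F 0 + G" using Sb[OF N0] by simp
  have SN: "?S (N-1) = (1/vt) * F (N-1) + G" using Sb[of "N-1"] N0 by simp
  have NN: "length R - k = N - 1" unfolding N_def by simp
  have Mfact: "Min (?S ` {..<N}) = min (?S 0) (?S (N-1))"
  proof (rule antisym)
    show "Min (?S ` {..<N}) \<le> min (?S 0) (?S (N-1))"
    proof -
      have i0: "?S 0 \<in> ?S ` {..<N}" by (rule imageI) (use N0 in simp)
      have iN: "?S (N-1) \<in> ?S ` {..<N}" by (rule imageI) (use N0 in simp)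
      have "Min (?S ` {..<N}) \<le> ?S 0" by (rule Min_le[OF _ i0]) simp
      moreover have "Min (?S ` {..<N}) \<le> ?S (N-1)" by (rule Min_le[OF _ iN]) simp
      ultimately show ?thesis by simp
    qed
    show "min (?S 0) (?S (N-1)) \<le> Min (?S ` {..<N})"
    proof (rule Min.boundedI)
      show "finite (?S ` {..<N})" by simp
      show "?S ` {..<N} \<noteq> {}" using N0 by auto
      fix a assume "a \<in> ?S ` {..<N}"
      then obtain j where j: "j < N" "a = ?S j" by auto
      have c: "1/vt > 0" using vt_pos by simp
      have "min ((1/vt) * F 0) ((1/vt) * F (N-1)) \<le> (1/vt) * F j"
      proof -
        have "min ((1/vt) * F 0) ((1/vt) * F (N-1)) = (1/vt) * min (F 0) (F (N-1))"
          using c by (simp add: min_mult_distrib_left)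
        also have "\<dots> \<le> (1/vt) * F j" using Fmin[OF j(1)] c by (intro mult_left_mono) auto
        finally show ?thesis .
      qed
      then have "min ((1/vt) * F 0 + G) ((1/vt) * F (N-1) + G) \<le> (1/vt) * F j + G"
        by (simp add: min_add_distrib_left min_add_distrib_right)
      then show "min (?S 0) (?S (N-1)) \<le> a" unfolding j(2) Sb[OF j(1)] S0 SN .
    qed
  qed
  have e1: "{..<length R - k + 1} = {..<N}" by (simp add: N_def)
  have e2: "drop (length R - k) R = drop (N-1) R" using NN by simp
  show ?thesis unfolding e1 e2 using Mfact by (simp only: drop_0)
qed


end
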